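(* Let $g:\mathbb{Z}\to[0,\infty)$ be such that $\liminf_{k\to\infty}g(q_0k)^{1/k}\geq1$ for every $q_0\in\mathbb{N}$. Let $\xi\in\mathbb{R}$ satisfy $|\xi-p/q|\geq g(q)\geq0$ for all $p\in\mathbb{Z}$, $q\in\mathbb{N}$, let $\beta=e^{2i\pi\xi}$, $\varphi(z)=\beta z$, and $C_\varphi f=f\circ\varphi$ on $\mathrm{Hol}(\mathbb{D})$. Then $$\{\beta^n:n\in\mathbb{N}_0\}\subset\sigma(C_\varphi)\subset\{e^{2i\pi x}:x\in\mathbb{R}\setminus\mathbb{Q}\}\cup\{1\}.$$
   Context: $\mathbb{D}$ is the open unit disc, $\mathrm{Hol}(\mathbb{D})$ the Fréchet space of holomorphic functions on $\mathbb{D}$, $\mathbb{N}_0=\mathbb{N}\cup\{0\}$. $\sigma(C_\varphi)$ is the set of $\lambda\in\mathbb{C}$ such that $\lambda\mathrm{Id}-C_\varphi$ is not bijective on $\mathrm{Hol}(\mathbb{D})$. *)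

theory Defs
  imports "HOL-Complex_Analysis.Complex_Analysis"
begin

text \<open>Hol(D): holomorphic functions on the open unit disc. A function on D is represented
  canonically by its extension by 0 outside D, so equality of elements is equality on D.\<close>
definition HolD :: "(complex \<Rightarrow> complex) set" where
  "HolD = {f. f holomorphic_on ball 0 1 \<and> (\<forall>z. z \<notin> ball 0 1 \<longrightarrow> f z = 0)}"

definition comp_op :: "(complex \<Rightarrow> complex) \<Rightarrow> (complex \<Rightarrow> complex) \<Rightarrow> (complex \<Rightarrow> complex)" where
  "comp_op \<phi> f = (\<lambda>z. if z \<in> ball 0 1 then f (\<phi> z) else 0)"

definition spec_comp :: "(complex \<Rightarrow> complex) \<Rightarrow> complex set" where
  "spec_comp \<phi> = {c. \<not> bij_betw (\<lambda>f. (\<lambda>z. c * f z - comp_op \<phi> f z)) HolD HolD}"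

end

theory Submission
  imports Defs
begin

lemma comp_holo:
  assumes "norm \<beta> = (1::real)" "f holomorphic_on ball 0 1"
  shows "(\<lambda>z. f (\<beta> * z)) holomorphic_on ball 0 1"
proof -
  have "(\<lambda>z. \<beta> * z) ` ball 0 1 \<subseteq> ball 0 1"
    using assms(1) by (auto simp: norm_mult)
  then have "(f \<circ> (\<lambda>z. \<beta> * z)) holomorphic_on ball 0 1"
    by (intro holomorphic_on_compose holomorphic_intros holomorphic_on_subset[OF assms(2)])
  then show ?thesis by (simp add: o_def)
qed

lemma T_maps:
  assumes "norm \<beta> = (1::real)" "f \<in> HolD"
  shows "(\<lambda>z. c * f z - comp_op (\<lambda>z. \<beta> * z) f z) \<in> HolD"
proof -
  have hf: "f holomorphic_on ball 0 1" and z: "\<And>z. z \<notin> ball 0 1 \<Longrightarrow> f z = 0"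
    using assms(2) by (auto simp: HolD_def)
  have "(\<lambda>z. c * f z - f (\<beta> * z)) holomorphic_on ball 0 1"
    by (intro holomorphic_intros hf comp_holo[OF assms(1) hf])
  then have "(\<lambda>z. c * f z - comp_op (\<lambda>z. \<beta> * z) f z) holomorphic_on ball 0 1"
    by (rule holomorphic_transform) (simp add: comp_op_def)
  then show ?thesis using z by (auto simp: HolD_def comp_op_def)
qed

lemma T_inj:
  assumes b: "norm \<beta> = (1::real)" and c: "\<And>n. c \<noteq> \<beta> ^ n"
    and f: "f \<in> HolD" and g: "g \<in> HolD"
    and eq: "(\<lambda>z. c * f z - comp_op (\<lambda>z. \<beta> * z) f z) = (\<lambda>z. c * g z - comp_op (\<lambda>z. \<beta> * z) g z)"
  shows "f = g"
proof -
  have hf: "f holomorphic_on ball 0 1" and zf: "\<And>z. z \<notin> ball 0 1 \<Longrightarrow> f z = 0"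
    using f by (auto simp: HolD_def)
  have hg: "g holomorphic_on ball 0 1" and zg: "\<And>z. z \<notin> ball 0 1 \<Longrightarrow> g z = 0"
    using g by (auto simp: HolD_def)
  define D where "D = (\<lambda>z. f z - g z)"
  have hD: "D holomorphic_on ball 0 1" unfolding D_def by (intro holomorphic_intros hf hg)
  have hDb: "(\<lambda>z. D (\<beta> * z)) holomorphic_on ball 0 1" by (rule comp_holo[OF b hD])
  have E0: "c * D z - D (\<beta> * z) = 0" if "z \<in> ball 0 1" for z
  proof -
    have "c * f z - comp_op (\<lambda>z. \<beta> * z) f z = c * g z - comp_op (\<lambda>z. \<beta> * z) g z"
      using fun_cong[OF eq, of z] by simp
    then show ?thesis using that by (simp add: comp_op_def D_def algebra_simps)
  qed
  have dz: "(deriv ^^ n) D 0 = 0" for n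
  proof -
    have "(deriv ^^ n) (\<lambda>z. c * D z - D (\<beta> * z)) 0 = (deriv ^^ n) (\<lambda>z. 0) 0"
      by (rule higher_deriv_transform_within_open[where S="ball 0 1"])
         (use E0 in \<open>auto intro!: holomorphic_intros hD hDb\<close>)
    also have "\<dots> = 0" by simp
    finally have 1: "(deriv ^^ n) (\<lambda>z. c * D z - D (\<beta> * z)) 0 = 0" .
    have "(deriv ^^ n) (\<lambda>z. c * D z - D (\<beta> * z)) 0
        = (deriv ^^ n) (\<lambda>z. c * D z) 0 - (deriv ^^ n) (\<lambda>z. D (\<beta> * z)) 0"
      by (rule higher_deriv_diff[where S="ball 0 1"]) (auto intro!: holomorphic_intros hD hDb)
    also have "\<dots> = c * (deriv ^^ n) D 0 - \<beta>^n * (deriv ^^ n) D 0"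
      using higher_deriv_cmult[OF hD, of 0 n c]
        higher_deriv_compose_linear[OF hD, of "ball 0 1" 0 \<beta> n] b
      by (simp add: norm_mult)
    finally have "c * (deriv ^^ n) D 0 - \<beta>^n * (deriv ^^ n) D 0 = 0" using 1 by simp
    then have "(c - \<beta>^n) * (deriv ^^ n) D 0 = 0" by (simp add: algebra_simps)
    then have "c - \<beta>^n = 0 \<or> (deriv ^^ n) D 0 = 0" by simp
    then show ?thesis using c[of n] by auto
  qed
  have "D w = 0" if "w \<in> ball 0 1" for w
  proof -
    have "(\<lambda>n. (deriv ^^ n) D 0 / fact n * (w - 0) ^ n) sums D w"
      by (rule holomorphic_power_series[OF hD that])
    then show ?thesis using dz sums_unique2[OF _ sums_zero] by (simp add: sums_0) 
  qed
  then show ?thesis using zf zg unfolding D_def by (metis eq_iff_diff_eq_0 ext)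
qed

lemma T_surj:
  assumes b: "norm \<beta> = (1::real)" and c: "\<And>n. c \<noteq> \<beta> ^ n"
    and bnd: "\<And>\<rho>. 0 < \<rho> \<Longrightarrow> \<rho> < 1 \<Longrightarrow>
       \<exists>C. eventually (\<lambda>k. norm (1 / (c - \<beta> ^ k)) \<le> C / \<rho> ^ k) sequentially"
    and h: "h \<in> HolD"
  shows "\<exists>f\<in>HolD. (\<lambda>z. c * f z - comp_op (\<lambda>z. \<beta> * z) f z) = h"
proof -
  have hh: "h holomorphic_on ball 0 1" and zh: "\<And>z. z \<notin> ball 0 1 \<Longrightarrow> h z = 0"
    using h by (auto simp: HolD_def)
  define bb where "bb n = (deriv ^^ n) h 0 / fact n" for n
  have hs: "(\<lambda>n. bb n * w ^ n) sums h w" if "w \<in> ball 0 1" for w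
    using holomorphic_power_series[OF hh that] by (simp add: bb_def)
  have absb: "summable (\<lambda>n. norm (bb n) * t ^ n)" if t: "0 \<le> t" "t < 1" for t :: real
  proof -
    define s where "s = (1 + t) / 2"
    have ns: "norm (complex_of_real s) = \<bar>s\<bar>" by (rule norm_of_real)
    have "complex_of_real s \<in> ball 0 1" using t ns unfolding mem_ball_0 s_def by simp
    then have "summable (\<lambda>n. bb n * complex_of_real s ^ n)" using hs sums_summable by blast
    moreover have "norm (complex_of_real t) < norm (complex_of_real s)" using t ns unfolding s_def by simp
    ultimately have "summable (\<lambda>n. norm (bb n * complex_of_real t ^ n))" by (rule powser_insidea)
    then show ?thesis using t by (simp add: norm_mult norm_power)
  qed
  define a where "a n = bb n / (c - \<beta> ^ n)" for n
  have conv: "summable (\<lambda>n. a n * w ^ n)" if w: "w \<in> ball 0 1" for w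
  proof -
    define \<rho> where "\<rho> = (1 + norm w) / 2"
    have r: "0 < \<rho>" "\<rho> < 1" "norm w < \<rho>" proof -
      have "norm w < 1" "0 \<le> norm w" using w by auto
      then show "0 < \<rho>" "\<rho> < 1" "norm w < \<rho>" unfolding \<rho>_def
        by (simp_all add: add_pos_nonneg)
    qed
    obtain C where C: "eventually (\<lambda>k. norm (1 / (c - \<beta> ^ k)) \<le> C / \<rho> ^ k) sequentially"
      using bnd[OF r(1,2)] by blast
    define t where "t = norm w / \<rho>"
    have t: "0 \<le> t" "t < 1" using r by (auto simp: t_def)
    show ?thesis
    proof (rule summable_comparison_test_ev)
      show "summable (\<lambda>n. C * (norm (bb n) * t ^ n))"
        by (intro summable_mult absb t)
      show "eventually (\<lambda>n. norm (a n * w ^ n) \<le> C * (norm (bb n) * t ^ n)) sequentially"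
        using C
      proof eventually_elim
        case (elim n)
        have "norm (a n * w ^ n) = norm (bb n) * norm (1 / (c - \<beta> ^ n)) * norm w ^ n"
          by (simp add: a_def norm_mult norm_divide norm_power)
        also have "\<dots> \<le> norm (bb n) * (C / \<rho> ^ n) * norm w ^ n"
          by (intro mult_right_mono mult_left_mono elim) auto
        also have "\<dots> = C * (norm (bb n) * t ^ n)"
          using r by (simp add: t_def power_divide)
        finally show ?case .
      qed
    qed
  qed
  define F where "F w = (\<Sum>n. a n * w ^ n)" for w
  have Fs: "(\<lambda>n. a n * w ^ n) sums F w" if "w \<in> ball 0 1" for w
    unfolding F_def using conv[OF that] by (rule summable_sums)
  have hF: "F holomorphic_on ball 0 1"
    by (rule power_series_holomorphic[where a=a]) (use Fs in simp)
  define f where "f z = (if z \<in> ball 0 1 then F z else 0)" for z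
  have hf: "f holomorphic_on ball 0 1"
    by (rule holomorphic_transform[OF hF]) (simp add: f_def)
  have fH: "f \<in> HolD" using hf by (simp add: HolD_def f_def)
  have "(\<lambda>z. c * f z - comp_op (\<lambda>z. \<beta> * z) f z) = h"
  proof
    fix z
    show "c * f z - comp_op (\<lambda>z. \<beta> * z) f z = h z"
    proof (cases "z \<in> ball 0 1")
      case True
      have bz: "\<beta> * z \<in> ball 0 1" using True b by (simp add: norm_mult)
      have "(\<lambda>n. c * (a n * z ^ n) - a n * (\<beta> * z) ^ n) sums (c * F z - F (\<beta> * z))"
        by (intro sums_diff sums_mult Fs True bz)
      moreover have "c * (a n * z ^ n) - a n * (\<beta> * z) ^ n = bb n * z ^ n" for n
      proof -
        have "c - \<beta> ^ n \<noteq> 0" using c[of n] by simp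
        then have "a n * (c - \<beta> ^ n) = bb n" by (simp add: a_def)
        then have "(a n * (c - \<beta> ^ n)) * z ^ n = bb n * z ^ n" by simp
        then show ?thesis by (simp add: algebra_simps power_mult_distrib)
      qed
      ultimately have "(\<lambda>n. bb n * z ^ n) sums (c * F z - F (\<beta> * z))" by simp
      then have "c * F z - F (\<beta> * z) = h z" using hs[OF True] sums_unique2 by blast
      then show ?thesis using True bz by (simp add: f_def comp_op_def)
    next
      case False
      then show ?thesis by (simp add: f_def comp_op_def zh)
    qed
  qed
  then show ?thesis using fH by blast
qed


lemma not_spec:
  assumes b: "norm \<beta> = (1::real)" and c: "\<And>n. c \<noteq> \<beta> ^ n"
    and bnd: "\<And>\<rho>. 0 < \<rho> \<Longrightarrow> \<rho> < 1 \<Longrightarrow>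
       \<exists>C. eventually (\<lambda>k. norm (1 / (c - \<beta> ^ k)) \<le> C / \<rho> ^ k) sequentially"
  shows "c \<notin> spec_comp (\<lambda>z. \<beta> * z)"
proof -
  have "bij_betw (\<lambda>f. (\<lambda>z. c * f z - comp_op (\<lambda>z. \<beta> * z) f z)) HolD HolD"
    unfolding bij_betw_def
  proof
    show "inj_on (\<lambda>f. (\<lambda>z. c * f z - comp_op (\<lambda>z. \<beta> * z) f z)) HolD"
      proof (rule inj_onI)
      fix f g assume "f \<in> HolD" "g \<in> HolD"
        "(\<lambda>z. c * f z - comp_op (\<lambda>z. \<beta> * z) f z) = (\<lambda>z. c * g z - comp_op (\<lambda>z. \<beta> * z) g z)"
      then show "f = g" by (rule T_inj[OF b c])
    qed
    show "(\<lambda>f. (\<lambda>z. c * f z - comp_op (\<lambda>z. \<beta> * z) f z)) ` HolD = HolD"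
    proof
      show "(\<lambda>f. (\<lambda>z. c * f z - comp_op (\<lambda>z. \<beta> * z) f z)) ` HolD \<subseteq> HolD"
        using T_maps[OF b] by blast
      show "HolD \<subseteq> (\<lambda>f. (\<lambda>z. c * f z - comp_op (\<lambda>z. \<beta> * z) f z)) ` HolD"
        proof
        fix h assume "h \<in> HolD"
        then obtain f where "f \<in> HolD" "(\<lambda>z. c * f z - comp_op (\<lambda>z. \<beta> * z) f z) = h"
          using T_surj[OF b c bnd] by blast
        then show "h \<in> (\<lambda>f. (\<lambda>z. c * f z - comp_op (\<lambda>z. \<beta> * z) f z)) ` HolD" by blast
      qed
    qed
  qed
  then show ?thesis by (simp add: spec_comp_def)
qed

lemma in_spec: assumes b: "norm \<beta> = (1::real)" shows "\<beta> ^ n \<in> spec_comp (\<lambda>z. \<beta> * z)"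
proof -
  define f where "f z = (if z \<in> ball 0 1 then z ^ n else 0)" for z :: complex
  have "(\<lambda>z. z ^ n) holomorphic_on ball 0 1" by (intro holomorphic_intros)
  then have "f holomorphic_on ball 0 1" by (rule holomorphic_transform) (simp add: f_def)
  then have fH: "f \<in> HolD" by (simp add: HolD_def f_def)
  have zH: "(\<lambda>z. 0) \<in> HolD" by (simp add: HolD_def)
  have "f \<noteq> (\<lambda>z. 0)"
  proof
    assume "f = (\<lambda>z. 0)"
    then have "f (1/2) = 0" by simp
    then show False by (simp add: f_def)
  qed
  moreover have "(\<lambda>z. \<beta> ^ n * f z - comp_op (\<lambda>z. \<beta> * z) f z) = (\<lambda>z. \<beta> ^ n * 0 - comp_op (\<lambda>z. \<beta> * z) (\<lambda>z. 0) z)"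
  proof
    fix z :: complex
    show "\<beta> ^ n * f z - comp_op (\<lambda>z. \<beta> * z) f z = \<beta> ^ n * 0 - comp_op (\<lambda>z. \<beta> * z) (\<lambda>z. 0) z"
    proof (cases "z \<in> ball 0 1")
      case True
      then have "\<beta> * z \<in> ball 0 1" using b by (simp add: norm_mult)
      then show ?thesis using True unfolding comp_op_def f_def by (auto simp: power_mult_distrib)
    qed (simp add: f_def comp_op_def)
  qed
  ultimately have "\<not> inj_on (\<lambda>f. (\<lambda>z. \<beta> ^ n * f z - comp_op (\<lambda>z. \<beta> * z) f z)) HolD"
    using fH zH by (meson inj_onD)
  then show ?thesis by (auto simp: spec_comp_def bij_betw_def)
qed

lemma cube_le: fixes a :: real assumes "0 \<le> a" "a < 2" shows "a ^ 3 \<le> 4 * a"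
proof -
  have "a^2 \<le> 2^2" using assms by (intro power_mono) auto
  then have "a * a^2 \<le> a * 4" using assms(1) by (intro mult_left_mono) auto
  moreover have "a ^ 3 = a * a^2" by (simp add: power_Suc numeral_3_eq_3 numeral_2_eq_2)
  ultimately show ?thesis by simp
qed

lemma chord:
  fixes s :: real
  assumes "\<bar>s\<bar> \<le> 1/2"
  shows "\<bar>s\<bar> \<le> norm (exp (2 * pi * \<i> * complex_of_real s) - 1)"
proof -
  define y where "y = pi * s"
  have ys: "\<bar>y\<bar> = pi * \<bar>s\<bar>" using pi_gt_zero by (simp add: y_def abs_mult)
  have y: "\<bar>y\<bar> \<le> pi / 2" using assms pi_gt_zero unfolding ys
    by (metis mult.commute mult_left_mono less_eq_real_def times_divide_eq_right mult_1 )
  have y2: "\<bar>y\<bar> < 2" using y pi_less_4 by linarith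
  have "\<bar>sin y - (\<Sum>m<3. sin_coeff m * y ^ m)\<bar> \<le> inverse (fact 3) * \<bar>y\<bar> ^ 3"
    by (rule Maclaurin_sin_bound)
  moreover have "(\<Sum>m<3. sin_coeff m * y ^ m) = y"
    by (simp add: numeral_3_eq_3 sin_coeff_def)
  moreover have "inverse (fact 3) * \<bar>y\<bar> ^ 3 = \<bar>y\<bar> ^ 3 / 6"
    by (simp add: fact_numeral field_simps)
  ultimately have 1: "\<bar>sin y - y\<bar> \<le> \<bar>y\<bar> ^ 3 / 6" by simp
  have "\<bar>y\<bar> ^ 3 \<le> 4 * \<bar>y\<bar>" by (rule cube_le) (use y2 in auto)
  then have "\<bar>sin y - y\<bar> \<le> 2 / 3 * \<bar>y\<bar>" using 1 by linarith
  then have sy: "\<bar>y\<bar> / 3 \<le> \<bar>sin y\<bar>" by linarith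
  define \<theta> where "\<theta> = 2 * y"
  have e: "exp (2 * pi * \<i> * complex_of_real s) = exp (\<i> * complex_of_real \<theta>)"
  proof -
    have "2 * pi * \<i> * complex_of_real s = \<i> * complex_of_real \<theta>"
      by (simp add: \<theta>_def y_def)
    then show ?thesis by (rule arg_cong)
  qed
  have "(norm (exp (\<i> * complex_of_real \<theta>) - 1))^2 = (cos \<theta> - 1)^2 + (sin \<theta>)^2"
    by (simp add: cmod_power2 Re_exp Im_exp)
  also have "\<dots> = 2 - 2 * cos \<theta>" 
  proof -
    have "(cos \<theta> - 1)^2 = (cos \<theta>)^2 - 2 * cos \<theta> + 1" by (simp add: power2_diff)
    then show ?thesis using sin_cos_squared_add[of \<theta>] by linarith
  qed
  also have "\<dots> = (2 * sin y)^2" by (simp add: \<theta>_def cos_double_sin power2_eq_square)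
  also have "\<dots> = \<bar>2 * sin y\<bar>^2" by simp
  finally have "norm (exp (\<i> * complex_of_real \<theta>) - 1) = \<bar>2 * sin y\<bar>"
    using power2_eq_iff_nonneg norm_ge_zero abs_ge_zero by blast
  then have "norm (exp (2 * pi * \<i> * complex_of_real s) - 1) \<ge> 2 * \<bar>y\<bar> / 3"
    using e sy by (simp add: abs_mult)
  moreover have "\<bar>s\<bar> \<le> 2 * \<bar>y\<bar> / 3"
  proof -
    have "3 * \<bar>s\<bar> \<le> pi * \<bar>s\<bar>" using pi_gt3 by (intro mult_right_mono) auto
    then show ?thesis unfolding ys by linarith
  qed
  ultimately show ?thesis by linarith
qed

lemma liminf_bound:
  fixes g :: "int \<Rightarrow> real"
  assumes g_nonneg: "\<And>n. g n \<ge> 0"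
    and g_liminf: "\<And>q0::nat. q0 > 0 \<Longrightarrow>
          Liminf sequentially (\<lambda>k::nat. ereal (g (int q0 * int k) powr (1 / real k))) \<ge> 1"
    and q: "q0 > 0" and r: "0 < \<rho>" "\<rho> < 1"
  shows "eventually (\<lambda>k. k \<ge> 1 \<and> \<rho> ^ k \<le> g (int q0 * int k)) sequentially"
proof -
  have "eventually (\<lambda>k. ereal \<rho> < ereal (g (int q0 * int k) powr (1 / real k))) sequentially"
  proof -
    have "ereal \<rho> < 1" using r by simp
    then show ?thesis using g_liminf[OF q] unfolding le_Liminf_iff by blast
  qed
  moreover have "eventually (\<lambda>k::nat. k \<ge> 1) sequentially" by (rule eventually_ge_at_top)
  ultimately show ?thesis
  proof eventually_elim
    case (elim k)
    define G where "G = g (int q0 * int k)"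
    have lt: "\<rho> < G powr (1 / real k)" using elim by (simp add: G_def)
    then have "G \<noteq> 0" using r by auto
    then have G: "G > 0" using g_nonneg[of "int q0 * int k"] by (simp add: G_def)
    have "\<rho> ^ k \<le> (G powr (1 / real k)) ^ k"
      using lt r by (intro power_mono) auto
    also have "\<dots> = (G powr (1 / real k)) powr (real k)"
      using G by (simp add: powr_realpow)
    also have "\<dots> = G" using elim G by (simp add: powr_powr)
    finally show ?case using elim by (simp add: G_def)
  qed
qed


lemma E_add: "exp (complex_of_real (2*pi)*\<i>*complex_of_real (a+b)) = exp (complex_of_real (2*pi)*\<i>*complex_of_real a) * exp (complex_of_real (2*pi)*\<i>*complex_of_real b)"
proof -
  have "complex_of_real (2*pi)*\<i>*complex_of_real (a+b) = complex_of_real (2*pi)*\<i>*complex_of_real a + complex_of_real (2*pi)*\<i>*complex_of_real b"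
    by (simp only: of_real_add distrib_left)
  then show ?thesis by (simp only: exp_add)
qed

lemma E_int: "exp (complex_of_real (2*pi)*\<i>*complex_of_real (of_int m)) = 1"
  unfolding exp_eq_1 by (intro conjI exI[of _ m]) simp_all

lemma E_norm: "norm (exp (complex_of_real (2*pi)*\<i>*complex_of_real t)) = 1"
proof -
  have "complex_of_real (2*pi)*\<i>*complex_of_real t = \<i> * complex_of_real (2*pi*t)" by simp
  then show ?thesis by (metis norm_exp_i_times)
qed

lemma E_pow: "exp (complex_of_real (2*pi)*\<i>*complex_of_real t) ^ n = exp (complex_of_real (2*pi)*\<i>*complex_of_real (real n * t))"
proof -
  have "complex_of_real (2*pi)*\<i>*complex_of_real (real n * t) = of_nat n * (complex_of_real (2*pi)*\<i>*complex_of_real t)"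
    by (simp only: of_real_mult of_real_of_nat_eq mult_ac)
  then show ?thesis by (simp only: exp_of_nat_mult)
qed

lemma irr_xi:
  fixes g :: "int \<Rightarrow> real" and \<xi> :: real
  assumes g_nonneg: "\<And>n. g n \<ge> 0"
    and g_liminf: "\<And>q0::nat. q0 > 0 \<Longrightarrow>
          Liminf sequentially (\<lambda>k::nat. ereal (g (int q0 * int k) powr (1 / real k))) \<ge> 1"
    and dioph: "\<And>(p::int) (q::nat). q > 0 \<Longrightarrow> \<bar>\<xi> - real_of_int p / real q\<bar> \<ge> g (int q)"
  shows "\<xi> \<notin> \<rat>"
  proof
    assume "\<xi> \<in> \<rat>"
    then obtain a b :: int where ab: "b > 0" "\<xi> = of_int a / of_int b" by (meson Rats_cases')
    define q0 where "q0 = nat b"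
    have q0: "q0 > 0" "real q0 = of_int b" using ab by (auto simp: q0_def)
    have "eventually (\<lambda>k. k \<ge> 1 \<and> (1/2) ^ k \<le> g (int q0 * int k)) sequentially"
      using liminf_bound[OF g_nonneg g_liminf q0(1), of "1/2"] by simp
    then obtain N where N: "\<And>n. n \<ge> N \<Longrightarrow> n \<ge> 1 \<and> (1/2) ^ n \<le> g (int q0 * int n)"
      unfolding eventually_sequentially by blast
    define k where "k = N"
    have k: "k \<ge> 1" "(1/2) ^ k \<le> g (int q0 * int k)" using N[of N] by (auto simp: k_def)
    have "g (int (q0 * k)) \<le> \<bar>\<xi> - real_of_int (a * int k) / real (q0 * k)\<bar>"
      using q0 k by (intro dioph) simp
    also have "real_of_int (a * int k) / real (q0 * k) = \<xi>"
      using q0 k ab by (simp add: field_simps)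
    finally have "g (int q0 * int k) \<le> 0" by simp
    moreover have "(1/2::real) ^ k > 0" by simp
    ultimately show False using k by linarith
  qed


lemma bnd_off:
  fixes \<beta> c :: complex
  assumes b: "norm \<beta> = (1::real)" and c: "norm c \<noteq> 1" and r: "0 < \<rho>" "\<rho> < (1::real)"
  shows "\<exists>C. eventually (\<lambda>k. norm (1 / (c - \<beta> ^ k)) \<le> C / \<rho> ^ k) sequentially"
proof -
  define d where "d = \<bar>norm c - 1\<bar>"
  have d: "d > 0" using c by (simp add: d_def)
  have "norm (1 / (c - \<beta> ^ k)) \<le> (1/d) / \<rho> ^ k" for k
  proof -
    have "\<bar>norm c - norm (\<beta> ^ k)\<bar> \<le> norm (c - \<beta> ^ k)" by (rule norm_triangle_ineq3)
    moreover have "norm (\<beta> ^ k) = 1" using b by (simp add: norm_power)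
    ultimately have dl: "d \<le> norm (c - \<beta> ^ k)" by (simp add: d_def)
    have "norm (1 / (c - \<beta> ^ k)) = 1 / norm (c - \<beta> ^ k)" by (simp add: norm_divide)
    also have "\<dots> \<le> 1 / d" using d dl by (intro divide_left_mono) (auto intro!: mult_pos_pos)
    also have "1 / d \<le> (1/d) / \<rho> ^ k"
    proof -
      have "\<rho> ^ k \<le> 1" "\<rho> ^ k > 0" using r by (auto simp: power_le_one)
      then show ?thesis using d by (simp add: divide_le_eq)
    qed
    finally show ?thesis .
  qed
  then have "eventually (\<lambda>k. norm (1 / (c - \<beta> ^ k)) \<le> (1/d) / \<rho> ^ k) sequentially"
    by (intro always_eventually allI)
  then show ?thesis by blast
qed

lemma circle_rep:
  fixes c :: complex
  assumes "norm c = (1::real)"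
  shows "\<exists>x. c = exp (complex_of_real (2*pi) * \<i> * complex_of_real x)"
proof -
  have c0: "c \<noteq> 0" using assms by auto
  define x where "x = Im (Ln c) / (2 * pi)"
  have "c = exp (Ln c)" using c0 by simp
  also have "Ln c = \<i> * complex_of_real (Im (Ln c))"
    using c0 assms by (simp add: complex_eq_iff)
  also have "\<i> * complex_of_real (Im (Ln c)) = complex_of_real (2*pi) * \<i> * complex_of_real x"
    by (simp add: x_def)
  finally show ?thesis by blast
qed

lemma bnd_on:
  fixes g :: "int \<Rightarrow> real" and \<xi> x \<rho> :: real and \<beta> c :: complex and a b :: int
  assumes g_nonneg: "\<And>n. g n \<ge> 0"
    and g_liminf: "\<And>q0::nat. q0 > 0 \<Longrightarrow>
          Liminf sequentially (\<lambda>k::nat. ereal (g (int q0 * int k) powr (1 / real k))) \<ge> 1"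
    and dioph: "\<And>(p::int) (q::nat). q > 0 \<Longrightarrow> \<bar>\<xi> - real_of_int p / real q\<bar> \<ge> g (int q)"
    and beta: "\<beta> = exp (complex_of_real (2*pi) * \<i> * complex_of_real \<xi>)"
    and cx: "c = exp (complex_of_real (2*pi) * \<i> * complex_of_real x)"
    and ab: "b > 0" "x = of_int a / of_int b"
    and r: "0 < \<rho>" "\<rho> < 1"
  shows "eventually (\<lambda>k. norm (1 / (c - \<beta> ^ k)) \<le> 1 / \<rho> ^ k) sequentially"
proof -
  have b: "norm \<beta> = 1" using beta E_norm by simp
  have bn: "\<beta> ^ n = exp (complex_of_real (2*pi)*\<i>*complex_of_real (real n * \<xi>))" for n
    using beta E_pow by simp
  define q0 where "q0 = nat b"
  have q0: "q0 > 0" "real q0 = of_int b" using ab by (auto simp: q0_def)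
  have ev: "eventually (\<lambda>k. k \<ge> 1 \<and> \<rho> ^ k \<le> g (int q0 * int k)) sequentially"
    by (rule liminf_bound[OF g_nonneg g_liminf q0(1) r])
  then show ?thesis
  proof eventually_elim
    case (elim k)
    define t where "t = x - real k * \<xi>"
    define m where "m = round t"
    define s where "s = t - of_int m"
    have s: "\<bar>s\<bar> \<le> 1/2" using of_int_round_abs_le[of t] unfolding s_def m_def
      by (simp add: abs_minus_commute)
    have "x = real k * \<xi> + (of_int m + s)" by (simp add: s_def t_def)
    then have "c = exp (complex_of_real (2*pi)*\<i>*complex_of_real (real k * \<xi> + (of_int m + s)))"
      using cx by simp
    also have "\<dots> = \<beta> ^ k * exp (complex_of_real (2*pi)*\<i>*complex_of_real s)"
      by (simp only: E_add E_int bn mult_1)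
    finally have "c - \<beta> ^ k = \<beta> ^ k * (exp (complex_of_real (2*pi)*\<i>*complex_of_real s) - 1)"
      by (simp add: right_diff_distrib)
    then have nc: "norm (c - \<beta> ^ k) = norm (exp (complex_of_real (2*pi)*\<i>*complex_of_real s) - 1)"
      using b by (simp add: norm_mult norm_power)
    have qk: "q0 * k > 0" using q0 elim by simp
    have "g (int (q0 * k)) \<le> \<bar>\<xi> - real_of_int (a - m * b) / real (q0 * k)\<bar>"
      using qk by (rule dioph)
    also have "\<dots> = \<bar>s\<bar> / real k"
    proof -
      have kp: "real k > 0" using elim by simp
      have "s = of_int a / of_int b - real k * \<xi> - of_int m" by (simp add: s_def t_def ab)
      also have "\<dots> = - real k * (\<xi> - real_of_int (a - m * b) / real (q0 * k))"
        using q0 kp ab by (simp add: field_simps)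
      finally have "\<bar>s\<bar> = real k * \<bar>\<xi> - real_of_int (a - m * b) / real (q0 * k)\<bar>"
        using kp by (simp add: abs_mult)
      then show ?thesis using kp by simp
    qed
    also have "\<dots> \<le> \<bar>s\<bar>"
    proof -
      have "real k \<ge> 1" using elim by simp
      then have "\<bar>s\<bar> * 1 \<le> \<bar>s\<bar> * real k" by (intro mult_left_mono) auto
      then show ?thesis using \<open>real k \<ge> 1\<close> by (simp add: divide_le_eq)
    qed
    finally have "g (int q0 * int k) \<le> \<bar>s\<bar>" by simp
    then have le: "\<rho> ^ k \<le> norm (c - \<beta> ^ k)" using elim chord[OF s] nc by linarith
    have rp: "\<rho> ^ k > 0" using r by simp
    have "norm (1 / (c - \<beta> ^ k)) = 1 / norm (c - \<beta> ^ k)" by (simp add: norm_divide)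
    also have "\<dots> \<le> 1 / \<rho> ^ k" using le rp by (intro divide_left_mono) (auto intro!: mult_pos_pos)
    finally show ?case .
  qed
qed


theorem theorem4p5:
  fixes g :: "int \<Rightarrow> real" and \<xi> :: real and \<beta> :: complex
  assumes g_nonneg: "\<And>n. g n \<ge> 0"
    and g_liminf: "\<And>q0::nat. q0 > 0 \<Longrightarrow>
          Liminf sequentially (\<lambda>k::nat. ereal (g (int q0 * int k) powr (1 / real k))) \<ge> 1"
    and dioph: "\<And>(p::int) (q::nat). q > 0 \<Longrightarrow> \<bar>\<xi> - real_of_int p / real q\<bar> \<ge> g (int q)"
    and beta: "\<beta> = exp (2 * pi * \<i> * complex_of_real \<xi>)"
  shows "{\<beta> ^ n | n::nat. True} \<subseteq> spec_comp (\<lambda>z. \<beta> * z)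
       \<and> spec_comp (\<lambda>z. \<beta> * z) \<subseteq>
           {exp (2 * pi * \<i> * complex_of_real x) | x. x \<notin> \<rat>} \<union> {1}"
proof -
  have beta': "\<beta> = exp (complex_of_real (2*pi) * \<i> * complex_of_real \<xi>)"
    using beta by simp
  have b: "norm \<beta> = 1" using beta' E_norm by simp
  have bn: "\<beta> ^ n = exp (complex_of_real (2*pi)*\<i>*complex_of_real (real n * \<xi>))" for n
    using beta' E_pow by simp
  have irr: "\<xi> \<notin> \<rat>" by (rule irr_xi[OF g_nonneg g_liminf dioph])
  have part1: "{\<beta> ^ n | n::nat. True} \<subseteq> spec_comp (\<lambda>z. \<beta> * z)"
    using in_spec[OF b] by blast
  have part2: "c \<in> {exp (complex_of_real (2*pi) * \<i> * complex_of_real x) | x. x \<notin> \<rat>} \<union> {1}"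
    if cs: "c \<in> spec_comp (\<lambda>z. \<beta> * z)" for c
  proof (rule ccontr)
    assume "\<not> ?thesis"
    then have A: "\<And>x. x \<notin> \<rat> \<Longrightarrow> c \<noteq> exp (complex_of_real (2*pi) * \<i> * complex_of_real x)"
      and c1: "c \<noteq> 1"
      by blast+
    have cn: "c \<noteq> \<beta> ^ n" for n
    proof (cases "n = 0")
      case True then show ?thesis using c1 by simp
    next
      case False
      have "real n * \<xi> \<notin> \<rat>"
      proof
        assume "real n * \<xi> \<in> \<rat>"
        then have "(real n * \<xi>) / real n \<in> \<rat>" by (intro Rats_divide) auto
        then show False using irr False by simp
      qed
      then show ?thesis using A[of "real n * \<xi>"] bn[of n] by simp
    qed
    have bnd: "\<exists>C. eventually (\<lambda>k. norm (1 / (c - \<beta> ^ k)) \<le> C / \<rho> ^ k) sequentially"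
      if r: "0 < \<rho>" "\<rho> < 1" for \<rho>
    proof (cases "norm c = 1")
      case False
      then show ?thesis by (rule bnd_off[OF b _ r])
    next
      case True
      then obtain x where cx: "c = exp (complex_of_real (2*pi) * \<i> * complex_of_real x)"
        using circle_rep by blast
      then have "x \<in> \<rat>" using A by blast
      then obtain a b :: int where ab: "b > 0" "x = of_int a / of_int b" by (meson Rats_cases')
      have "eventually (\<lambda>k. norm (1 / (c - \<beta> ^ k)) \<le> 1 / \<rho> ^ k) sequentially"
        by (rule bnd_on[OF g_nonneg g_liminf dioph beta' cx ab r])
      then show ?thesis by blast
    qed
    have "c \<notin> spec_comp (\<lambda>z. \<beta> * z)" by (rule not_spec[OF b cn bnd])
    then show False using cs by simp
  qed
  have "spec_comp (\<lambda>z. \<beta> * z) \<subseteq>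
           {exp (complex_of_real (2*pi) * \<i> * complex_of_real x) | x. x \<notin> \<rat>} \<union> {1}"
    using part2 by blast
  then show ?thesis using part1 by simp
qed

end
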